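(* Let $R$ be a commutative ring, $S$ a multiplicative subset of $R$, and $M$ an $R$-module. The following are equivalent: (1) $M$ is uniformly $S$-Noetherian; (2) there exists $s\in S$ such that every ascending chain $M_1\subseteq M_2\subseteq\cdots$ of submodules of $M$ is stationary with respect to $s$, i.e. there is $k\ge 1$ with $sM_n\subseteq M_k$ for all $n\ge k$; (3) there exists $s\in S$ such that every nonempty family $\mathcal F$ of submodules of $M$ has a maximal element with respect to $s$, i.e. some $M_0\in\mathcal F$ such that $sN\subseteq M_0$ for every $N\in\mathcal F$ with $M_0\subseteq N$.
   Context: All rings are commutative with identity; a multiplicative subset $S$ contains $1$ and is closed under multiplication. An $R$-module $M$ is uniformly $S$-Noetherian ($u$-$S$-Noetherian) if there exists a single $s\in S$ such that for every submodule $N$ of $M$ there is a finitely generated submodule $F\subseteq N$ with $sN\subseteq F$. A ring is $u$-$S$-Noetherian if it is so as a module over itself. *)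

theory Defs
  imports "HOL.Modules"
begin

text \<open>An R-module is represented by the library locale module scale,
  where R is a type of class comm_ring_1 and M is the whole carrier type 'b.\<close>

definition mult_subset :: "'a::comm_ring_1 set \<Rightarrow> bool" where
  "mult_subset S \<longleftrightarrow> 1 \<in> S \<and> (\<forall>a\<in>S. \<forall>b\<in>S. a * b \<in> S)"

definition u_S_noetherian ::
  "('a::comm_ring_1 \<Rightarrow> 'b::ab_group_add \<Rightarrow> 'b) \<Rightarrow> 'a set \<Rightarrow> bool" where
  "u_S_noetherian scale S \<longleftrightarrow>
     (\<exists>s\<in>S. \<forall>N. module.subspace scale N \<longrightarrow>
        (\<exists>G. finite G \<and> module.span scale G \<subseteq> N \<and> scale s ` N \<subseteq> module.span scale G))"

definition S_stationary_chains ::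
  "('a::comm_ring_1 \<Rightarrow> 'b::ab_group_add \<Rightarrow> 'b) \<Rightarrow> 'a set \<Rightarrow> bool" where
  "S_stationary_chains scale S \<longleftrightarrow>
     (\<exists>s\<in>S. \<forall>Ms :: nat \<Rightarrow> 'b set.
        (\<forall>n. module.subspace scale (Ms n)) \<longrightarrow> (\<forall>n. Ms n \<subseteq> Ms (Suc n)) \<longrightarrow>
        (\<exists>k. \<forall>n\<ge>k. scale s ` Ms n \<subseteq> Ms k))"

definition S_maximal_families ::
  "('a::comm_ring_1 \<Rightarrow> 'b::ab_group_add \<Rightarrow> 'b) \<Rightarrow> 'a set \<Rightarrow> bool" where
  "S_maximal_families scale S \<longleftrightarrow>
     (\<exists>s\<in>S. \<forall>F :: 'b set set.
        F \<noteq> {} \<longrightarrow> (\<forall>N\<in>F. module.subspace scale N) \<longrightarrow>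
        (\<exists>M0\<in>F. \<forall>N\<in>F. M0 \<subseteq> N \<longrightarrow> scale s ` N \<subseteq> M0))"

end

theory Submission
  imports Defs
begin

context module
begin

lemma chain_mono_aux:
  assumes "\<forall>n. Ms n \<subseteq> Ms (Suc n)" "m \<le> n"
  shows "Ms m \<subseteq> Ms n"
  using assms by (metis lift_Suc_mono_le)

lemma finite_in_chain:
  assumes "\<forall>n. Ms n \<subseteq> Ms (Suc n)" "finite G" "G \<subseteq> (\<Union>n. Ms n)"
  shows "\<exists>k. G \<subseteq> Ms k"
  using assms(2,3)
proof (induction G rule: finite_induct)
  case empty then show ?case by auto
next
  case (insert x F)
  then obtain k where k: "F \<subseteq> Ms k" by auto
  from insert obtain j where j: "x \<in> Ms j" by auto
  have "F \<subseteq> Ms (max k j)" using k chain_mono_aux[OF assms(1), of k "max k j"] by auto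
  moreover have "x \<in> Ms (max k j)" using j chain_mono_aux[OF assms(1), of j "max k j"] by auto
  ultimately show ?case by blast
qed

lemma union_chain_subspace:
  assumes "\<forall>n. subspace (Ms n)" "\<forall>n. Ms n \<subseteq> Ms (Suc n)"
  shows "subspace (\<Union>n. Ms n)"
  unfolding subspace_def
proof (intro conjI ballI allI)
  show "0 \<in> (\<Union>n. Ms n)" using assms(1) subspace_0 by blast
next
  fix x y assume "x \<in> (\<Union>n. Ms n)" "y \<in> (\<Union>n. Ms n)"
  then obtain i j where "x \<in> Ms i" "y \<in> Ms j" by auto
  then have "x \<in> Ms (max i j)" "y \<in> Ms (max i j)"
    using chain_mono_aux[OF assms(2), of i "max i j"] chain_mono_aux[OF assms(2), of j "max i j"]
    by auto
  then show "x + y \<in> (\<Union>n. Ms n)" using assms(1) subspace_add by blast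
next
  fix c x assume "x \<in> (\<Union>n. Ms n)"
  then show "c *s x \<in> (\<Union>n. Ms n)" using assms(1) subspace_scale by blast
qed

lemma one_two:
  assumes "u_S_noetherian scale S" shows "S_stationary_chains scale S"
proof -
  from assms obtain s where s: "s \<in> S" and H: "\<forall>N. subspace N \<longrightarrow>
        (\<exists>G. finite G \<and> span G \<subseteq> N \<and> scale s ` N \<subseteq> span G)"
    unfolding u_S_noetherian_def by blast
  show ?thesis unfolding S_stationary_chains_def
  proof (intro bexI[OF _ s] allI impI)
    fix Ms :: "nat \<Rightarrow> 'b set"
    assume sub: "\<forall>n. subspace (Ms n)" and ch: "\<forall>n. Ms n \<subseteq> Ms (Suc n)"
    obtain G where G: "finite G" "span G \<subseteq> (\<Union>n. Ms n)" "scale s ` (\<Union>n. Ms n) \<subseteq> span G"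
      using H[rule_format, OF union_chain_subspace[OF sub ch]] by (elim exE conjE) (rule that)
    have "G \<subseteq> (\<Union>n. Ms n)" using G(2) span_superset by blast
    then obtain k where k: "G \<subseteq> Ms k" using finite_in_chain[OF ch G(1)] by blast
    have sk: "span G \<subseteq> Ms k" using span_minimal[OF k] sub by blast
    have "scale s ` Ms n \<subseteq> Ms k" for n
    proof -
      have "scale s ` Ms n \<subseteq> scale s ` (\<Union>n. Ms n)" by (rule image_mono) blast
      then show ?thesis using G(3) sk by (meson order_trans)
    qed
    then show "\<exists>k. \<forall>n\<ge>k. scale s ` Ms n \<subseteq> Ms k" by blast
  qed
qed

lemma two_three:
  assumes "S_stationary_chains scale S" shows "S_maximal_families scale S"
proof -
  from assms obtain s where s: "s \<in> S" and H: "\<forall>Ms :: nat \<Rightarrow> 'b set.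
        (\<forall>n. subspace (Ms n)) \<longrightarrow> (\<forall>n. Ms n \<subseteq> Ms (Suc n)) \<longrightarrow>
        (\<exists>k. \<forall>n\<ge>k. scale s ` Ms n \<subseteq> Ms k)"
    unfolding S_stationary_chains_def by (elim bexE) (rule that)
  show ?thesis unfolding S_maximal_families_def
  proof (intro bexI[OF _ s] allI impI, rule ccontr)
    fix F :: "'b set set"
    assume ne: "F \<noteq> {}" and sub: "\<forall>N\<in>F. subspace N"
      and no: "\<not> (\<exists>M0\<in>F. \<forall>N\<in>F. M0 \<subseteq> N \<longrightarrow> scale s ` N \<subseteq> M0)"
    have ex0: "\<forall>M0\<in>F. \<exists>N\<in>F. M0 \<subseteq> N \<and> \<not> scale s ` N \<subseteq> M0" using no by simp
    then have ex: "\<forall>M0\<in>F. \<exists>N. N \<in> F \<and> M0 \<subseteq> N \<and> \<not> scale s ` N \<subseteq> M0" unfolding Bex_def .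
    define f where "f M0 = (SOME N. N \<in> F \<and> M0 \<subseteq> N \<and> \<not> scale s ` N \<subseteq> M0)" for M0
    have f: "f M0 \<in> F \<and> M0 \<subseteq> f M0 \<and> \<not> scale s ` (f M0) \<subseteq> M0" if "M0 \<in> F" for M0
      unfolding f_def using someI_ex[OF ex[rule_format, OF that]] .
    from ne obtain A where A: "A \<in> F" by blast
    define Ms where "Ms n = (f ^^ n) A" for n
    have suc: "Ms (Suc n) = f (Ms n)" for n by (simp add: Ms_def)
    have inF: "Ms n \<in> F" for n
    proof (induction n)
      case 0 then show ?case using A by (simp add: Ms_def)
    next
      case (Suc n) then show ?case unfolding suc using f by blast
    qed
    have sm: "\<forall>n. subspace (Ms n)" using inF sub by blast
    have chn: "Ms n \<subseteq> Ms (Suc n)" for n unfolding suc using f[OF inF[of n]] by (rule conjunct1[OF conjunct2])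
    obtain k where k: "\<forall>n\<ge>k. scale s ` Ms n \<subseteq> Ms k"
      using H[rule_format, of Ms, OF sm[rule_format] chn] by (elim exE) (rule that)
    have "scale s ` Ms (Suc k) \<subseteq> Ms k" using k[rule_format, of "Suc k"] by simp
    then show False using f[OF inF[of k]] unfolding suc by simp
  qed
qed

lemma three_one:
  assumes "S_maximal_families scale S" shows "u_S_noetherian scale S"
proof -
  from assms obtain s where s: "s \<in> S" and H: "\<forall>F :: 'b set set.
        F \<noteq> {} \<longrightarrow> (\<forall>N\<in>F. subspace N) \<longrightarrow>
        (\<exists>M0\<in>F. \<forall>N\<in>F. M0 \<subseteq> N \<longrightarrow> scale s ` N \<subseteq> M0)"
    unfolding S_maximal_families_def by (elim bexE) (rule that)
  show ?thesis unfolding u_S_noetherian_def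
  proof (intro bexI[OF _ s] allI impI)
    fix N assume N: "subspace N"
    define F where "F = {span G | G. finite G \<and> G \<subseteq> N}"
    have "span {} \<in> F" unfolding F_def by blast
    then have "F \<noteq> {}" by blast
    moreover have "\<forall>X\<in>F. subspace X" unfolding F_def by auto
    ultimately have "\<exists>M0\<in>F. \<forall>X\<in>F. M0 \<subseteq> X \<longrightarrow> scale s ` X \<subseteq> M0"
      using H by (elim allE[of _ F]) (elim impE)
    then obtain M0 where M0: "M0 \<in> F" "\<forall>X\<in>F. M0 \<subseteq> X \<longrightarrow> scale s ` X \<subseteq> M0"
      by (elim bexE) (rule that)
    then obtain G0 where G0: "M0 = span G0" "finite G0" "G0 \<subseteq> N" unfolding F_def by blast
    have "span G0 \<subseteq> N" using span_minimal[OF G0(3) N] .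
    moreover have "scale s ` N \<subseteq> span G0"
    proof
      fix y assume "y \<in> scale s ` N"
      then obtain x where x: "x \<in> N" "y = s *s x" by blast
      have inF: "span (insert x G0) \<in> F" unfolding F_def using G0 x by auto
      have sub2: "M0 \<subseteq> span (insert x G0)" unfolding G0(1) by (rule span_mono) (rule subset_insertI)
      have img: "scale s ` span (insert x G0) \<subseteq> M0" using M0(2) inF sub2 by simp
      have "x \<in> span (insert x G0)" by (simp add: span_base)
      then have "s *s x \<in> scale s ` span (insert x G0)" by (rule imageI)
      then have "s *s x \<in> M0" using img by (rule subsetD[rotated])
      then show "y \<in> span G0" using x(2) G0(1) by simp
    qed
    ultimately show "\<exists>G. finite G \<and> span G \<subseteq> N \<and> scale s ` N \<subseteq> span G"
      using G0(2) by blast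
  qed
qed

end

theorem theorem2p8:
  fixes scale :: "'a::comm_ring_1 \<Rightarrow> 'b::ab_group_add \<Rightarrow> 'b"
    and S :: "'a set"
  assumes "module scale"
    and "mult_subset S"
  shows "(u_S_noetherian scale S \<longleftrightarrow> S_stationary_chains scale S)
       \<and> (S_stationary_chains scale S \<longleftrightarrow> S_maximal_families scale S)"
  using module.one_two[OF assms(1)] module.two_three[OF assms(1)] module.three_one[OF assms(1)]
  by blast

end
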